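(* Let $\mathbf p$ be a probability vector with strictly positive entries and fix $\varepsilon>0$ such that $1-\varepsilon>\max_{n,i}\lambda_i^{(n)}$. There exists a constant $C_1=C_1(F,\mathbf p,\varepsilon)<\infty$ such that for all $\mathbf i\in\Sigma$ and $0<R\le1$, \[ \frac{\mu_{\mathbf p}(B_{\mathbf i}(R))}{\mu_{\mathbf p}(B_{\mathbf i}((1-\varepsilon)R))}\le C_1. \]
   Context: Setting: $\mathcal I=\{1,\dots,N\}$, $f_i(x)=A_ix+t_i$ on $\mathbb R^d$ with $A_i=\mathrm{diag}(\lambda_i^{(1)},\dots,\lambda_i^{(d)})$, all $\lambda_i^{(n)}\in(0,1)$, $f_i([0,1]^d)\subset[0,1]^d$, no two maps agree on $[0,1]^d$, and for all $m\ne n$ some $i$ has $\lambda_i^{(n)}\ne\lambda_i^{(m)}$; $F$ is the attractor. $\Sigma=\mathcal I^{\mathbb N}$, $\mu_{\mathbf p}=\mathbf p^{\mathbb N}$. For $\mathbf i\in\Sigma$, $r>0$, $L_{\mathbf i}(r,n)$ is the unique integer with $\prod_{\ell=1}^{L_{\mathbf i}(r,n)}\lambda_{i_\ell}^{(n)}\le r<\prod_{\ell=1}^{L_{\mathbf i}(r,n)-1}\lambda_{i_\ell}^{(n)}$. $\mathbf i$ determines a $\sigma$-ordered cube at scale $r$ if $L_{\mathbf i}(r,\sigma_d)\le\dots\le L_{\mathbf i}(r,\sigma_1)$, ties resolved by: if coordinates $k<m$ have $L_{\mathbf i}(r,k)=L_{\mathbf i}(r,m)$ then $k$ precedes $m$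 iff $\prod_{\ell=1}^{L_{\mathbf i}(r,k)}\lambda_{i_\ell}^{(k)}\ge\prod_{\ell=1}^{L_{\mathbf i}(r,k)}\lambda_{i_\ell}^{(m)}$; write $\sigma_{\mathbf i}(r)$ for this ordering. $E_n^\sigma$: span of coordinate axes $\sigma_1,\dots,\sigma_n$; $f_i,f_j$ overlap exactly on $E_n^\sigma$ if their orthogonal projections onto $E_n^\sigma$ agree on $[0,1]^d$. For $1\le n\le d-1$, $\mathcal I_n^\sigma$ is the set of $j$ such that no $i<j$ overlaps exactly with $j$ on $E_n^\sigma$; $\mathcal I_d^\sigma=\mathcal I$; $\Pi_n^\sigma j$ is the unique element of $\mathcal I_n^\sigma$ overlapping exactly with $j$ on $E_n^\sigma$, extended to $\Sigma$ coordinatewise. The symbolic approximate cube is $B_{\mathbf i}(r)=\{\mathbf j\in\Sigma:|\Pi_n^\sigma\mathbf j\wedge\Pi_n^\sigma\mathbf i|\ge L_{\mathbf i}(r,\sigma_n)\ \forall\,1\le n\le d\}$ with $\sigma=\sigma_{\mathbf i}(r)$ and $\wedge$ the longest common prefix. *)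

theory Defs
  imports "HOL-Probability.Probability"
begin

text \<open>Coordinates are indexed by 1..d, maps by 1..N. Points of R^d are functions
  nat => real (only coordinates 1..d matter).  Symbolic sequences are nat => nat, with
  the sequence position l (1-based in the paper) stored at index l-1.\<close>

definition fmap :: "(nat \<Rightarrow> nat \<Rightarrow> real) \<Rightarrow> (nat \<Rightarrow> nat \<Rightarrow> real) \<Rightarrow> nat \<Rightarrow> (nat \<Rightarrow> real) \<Rightarrow> nat \<Rightarrow> real" where
  "fmap lam t i x n = lam i n * x n + t i n"

definition unit_cube :: "nat \<Rightarrow> (nat \<Rightarrow> real) set" where
  "unit_cube d = {x. \<forall>n\<in>{1..d}. x n \<in> {0..1}}"

definition SigmaN :: "nat \<Rightarrow> (nat \<Rightarrow> nat) set" where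
  "SigmaN N = {ii. \<forall>l. ii l \<in> {1..N}}"

text \<open>L_i(r,n): the least L with prod_{l=1}^L lam_{i_l}^{(n)} <= r
  (for 0<r<1 this is the unique integer of the paper; for r = 1 it is 0).\<close>
definition Lfun :: "(nat \<Rightarrow> nat \<Rightarrow> real) \<Rightarrow> (nat \<Rightarrow> nat) \<Rightarrow> real \<Rightarrow> nat \<Rightarrow> nat" where
  "Lfun lam ii r n = (LEAST L. (\<Prod>l<L. lam (ii l) n) \<le> r)"

definition Pfun :: "(nat \<Rightarrow> nat \<Rightarrow> real) \<Rightarrow> (nat \<Rightarrow> nat) \<Rightarrow> nat \<Rightarrow> nat \<Rightarrow> real" where
  "Pfun lam ii L n = (\<Prod>l<L. lam (ii l) n)"

definition precedes :: "(nat \<Rightarrow> nat \<Rightarrow> real) \<Rightarrow> (nat \<Rightarrow> nat) \<Rightarrow> real \<Rightarrow> nat \<Rightarrow> nat \<Rightarrow> bool" where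
  "precedes lam ii r a b \<longleftrightarrow> a \<noteq> b \<and>
     (Lfun lam ii r b < Lfun lam ii r a \<or>
      (Lfun lam ii r a = Lfun lam ii r b \<and>
        (if a < b then Pfun lam ii (Lfun lam ii r a) a \<ge> Pfun lam ii (Lfun lam ii r a) b
         else Pfun lam ii (Lfun lam ii r a) a > Pfun lam ii (Lfun lam ii r a) b)))"

definition sigma_ord :: "(nat \<Rightarrow> nat \<Rightarrow> real) \<Rightarrow> nat \<Rightarrow> (nat \<Rightarrow> nat) \<Rightarrow> real \<Rightarrow> nat \<Rightarrow> nat" where
  "sigma_ord lam d ii r n =
     (THE c. c \<in> {1..d} \<and> card {c' \<in> {1..d}. precedes lam ii r c' c} = n - 1)"

text \<open>E_n^sigma is spanned by the axes sigma_1..sigma_n; overlapping exactly on it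
  means the corresponding coordinates of f_i and f_j agree on the unit cube.\<close>
definition overlap_exact :: "(nat \<Rightarrow> nat \<Rightarrow> real) \<Rightarrow> (nat \<Rightarrow> nat \<Rightarrow> real) \<Rightarrow> nat \<Rightarrow> (nat \<Rightarrow> nat) \<Rightarrow> nat \<Rightarrow> nat \<Rightarrow> nat \<Rightarrow> bool" where
  "overlap_exact lam t d sig n i j \<longleftrightarrow>
     (\<forall>x\<in>unit_cube d. \<forall>c\<in>sig ` {1..n}. fmap lam t i x c = fmap lam t j x c)"

definition Iset :: "(nat \<Rightarrow> nat \<Rightarrow> real) \<Rightarrow> (nat \<Rightarrow> nat \<Rightarrow> real) \<Rightarrow> nat \<Rightarrow> nat \<Rightarrow> (nat \<Rightarrow> nat) \<Rightarrow> nat \<Rightarrow> nat set" where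
  "Iset lam t d N sig n =
     (if n = d then {1..N}
      else {j \<in> {1..N}. \<not> (\<exists>i\<in>{1..N}. i < j \<and> overlap_exact lam t d sig n i j)})"

definition Pi_proj :: "(nat \<Rightarrow> nat \<Rightarrow> real) \<Rightarrow> (nat \<Rightarrow> nat \<Rightarrow> real) \<Rightarrow> nat \<Rightarrow> nat \<Rightarrow> (nat \<Rightarrow> nat) \<Rightarrow> nat \<Rightarrow> nat \<Rightarrow> nat" where
  "Pi_proj lam t d N sig n j =
     (THE k. k \<in> Iset lam t d N sig n \<and> overlap_exact lam t d sig n k j)"

definition lcp :: "(nat \<Rightarrow> nat) \<Rightarrow> (nat \<Rightarrow> nat) \<Rightarrow> enat" where
  "lcp x y = (if x = y then \<infinity> else enat (LEAST k. x k \<noteq> y k))"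

definition approx_cube :: "(nat \<Rightarrow> nat \<Rightarrow> real) \<Rightarrow> (nat \<Rightarrow> nat \<Rightarrow> real) \<Rightarrow> nat \<Rightarrow> nat \<Rightarrow> (nat \<Rightarrow> nat) \<Rightarrow> real \<Rightarrow> (nat \<Rightarrow> nat) set" where
  "approx_cube lam t d N ii r =
     (let sig = sigma_ord lam d ii r in
      {jj \<in> SigmaN N. \<forall>n\<in>{1..d}.
          enat (Lfun lam ii r (sig n))
            \<le> lcp (Pi_proj lam t d N sig n \<circ> jj) (Pi_proj lam t d N sig n \<circ> ii)})"

definition bernoulli_measure :: "nat pmf \<Rightarrow> (nat \<Rightarrow> nat) measure" where
  "bernoulli_measure p = (\<Pi>\<^sub>M l\<in>UNIV. measure_pmf p)"

end

theory Submission
  imports Defs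
begin

lemma bern_cyl:
  fixes p :: "nat pmf" and A :: "nat \<Rightarrow> nat set"
  assumes sp: "set_pmf p = {1..N}"
  shows "measure (bernoulli_measure p) {jj \<in> SigmaN N. \<forall>l<M. jj l \<in> A l}
         = (\<Prod>l<M. measure_pmf.prob p (A l))"
proof -
  interpret PP: product_prob_space "\<lambda>_. measure_pmf p" UNIV
    by unfold_locales
  have sp_eq: "space (bernoulli_measure p) = UNIV"
    by (simp add: bernoulli_measure_def space_PiM)
  let ?C = "{x\<in>space (bernoulli_measure p). \<forall>i\<in>{..<M}. x i \<in> A i}"
  let ?Z = "\<Union>l. {x\<in>space (bernoulli_measure p). x l \<in> - {1..N}}"
  have C: "emeasure (bernoulli_measure p) ?C = (\<Prod>l<M. emeasure (measure_pmf p) (A l))"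
    unfolding bernoulli_measure_def by (rule PP.emeasure_PiM_Collect) auto
  have Csets: "?C \<in> sets (bernoulli_measure p)"
    unfolding bernoulli_measure_def by (intro sets.sets_Collect_finite_All sets_Collect_single) auto
  have z0: "emeasure (measure_pmf p) (- {1..N}) = 0"
    using sp by (simp add: measure_pmf.emeasure_eq_measure measure_pmf_zero_iff)
  have Z: "?Z \<in> null_sets (bernoulli_measure p)"
  proof (rule null_sets_UN)
    fix l
    have "emeasure (bernoulli_measure p) {x\<in>space (bernoulli_measure p). x l \<in> - {1..N}} = 0"
      unfolding bernoulli_measure_def
      using z0 by (subst PP.emeasure_PiM_Collect_single) auto
    moreover have "{x\<in>space (bernoulli_measure p). x l \<in> - {1..N}} \<in> sets (bernoulli_measure p)"
      unfolding bernoulli_measure_def by (intro sets_Collect_single) auto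
    ultimately show "{x\<in>space (bernoulli_measure p). x l \<in> - {1..N}} \<in> null_sets (bernoulli_measure p)"
      by (auto simp: null_sets_def)
  qed
  have eq: "{jj \<in> SigmaN N. \<forall>l<M. jj l \<in> A l} = ?C - ?Z"
    by (auto simp: SigmaN_def sp_eq)
  have "measure (bernoulli_measure p) (?C - ?Z) = measure (bernoulli_measure p) ?C"
    using Csets Z by (rule measure_Diff_null_set)
  also have "\<dots> = (\<Prod>l<M. measure_pmf.prob p (A l))"
  proof -
    have "(\<Prod>l<M. emeasure (measure_pmf p) (A l)) = (\<Prod>l<M. ennreal (measure_pmf.prob p (A l)))"
      by (simp add: measure_pmf.emeasure_eq_measure)
    also have "\<dots> = ennreal (\<Prod>l<M. measure_pmf.prob p (A l))"
      by (rule prod_ennreal) simp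
    finally show ?thesis using C unfolding measure_def by (simp add: prod_nonneg)
  qed
  finally show ?thesis using eq by simp
qed

lemma prec_irrefl: "\<not> precedes lam ii r a a"
  unfolding precedes_def by simp

lemma prec_L: "precedes lam ii r a b \<Longrightarrow> Lfun lam ii r b \<le> Lfun lam ii r a"
  unfolding precedes_def by auto

lemma prec_total: "a \<noteq> b \<Longrightarrow> precedes lam ii r a b \<or> precedes lam ii r b a"
  unfolding precedes_def by (cases "Lfun lam ii r a" "Lfun lam ii r b" rule: linorder_cases) auto

lemma prec_asym: "precedes lam ii r a b \<Longrightarrow> \<not> precedes lam ii r b a"
  unfolding precedes_def by (cases "Lfun lam ii r a" "Lfun lam ii r b" rule: linorder_cases) auto

lemma prec_trans:
  assumes "precedes lam ii r a b" "precedes lam ii r b c"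
  shows "precedes lam ii r a c"
proof -
  have ac: "a \<noteq> c" using assms prec_asym by metis
  show ?thesis
  proof (cases "Lfun lam ii r a = Lfun lam ii r b \<and> Lfun lam ii r b = Lfun lam ii r c")
    case True
    then show ?thesis using assms ac unfolding precedes_def
      by (cases "a < b"; cases "b < c"; cases "a < c"; auto)
  next
    case False
    then show ?thesis using assms ac unfolding precedes_def by auto
  qed
qed

definition rk :: "(nat \<Rightarrow> nat \<Rightarrow> real) \<Rightarrow> (nat \<Rightarrow> nat) \<Rightarrow> real \<Rightarrow> nat \<Rightarrow> nat \<Rightarrow> nat" where
  "rk lam ii r d c = card {c' \<in> {1..d}. precedes lam ii r c' c}"

lemma rk_less: "c \<in> {1..d} \<Longrightarrow> rk lam ii r d c < d"
proof -
  assume c: "c \<in> {1..d}"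
  have "{c' \<in> {1..d}. precedes lam ii r c' c} \<subseteq> {1..d} - {c}"
    using prec_irrefl by fastforce
  hence "rk lam ii r d c \<le> card ({1..d} - {c})"
    unfolding rk_def by (intro card_mono) auto
  also have "\<dots> < d" using c by simp
  finally show ?thesis .
qed

lemma rk_mono:
  assumes "a \<in> {1..d}" "b \<in> {1..d}" "precedes lam ii r a b"
  shows "rk lam ii r d a < rk lam ii r d b"
proof -
  have "{c' \<in> {1..d}. precedes lam ii r c' a} \<subset> {c' \<in> {1..d}. precedes lam ii r c' b}"
  proof
    show "{c' \<in> {1..d}. precedes lam ii r c' a} \<subseteq> {c' \<in> {1..d}. precedes lam ii r c' b}"
      using assms(3) prec_trans by blast
    show "{c' \<in> {1..d}. precedes lam ii r c' a} \<noteq> {c' \<in> {1..d}. precedes lam ii r c' b}"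
      using assms prec_irrefl by blast
  qed
  then show ?thesis unfolding rk_def by (intro psubset_card_mono) auto
qed

lemma rk_inj:
  assumes "a \<in> {1..d}" "b \<in> {1..d}" "rk lam ii r d a = rk lam ii r d b"
  shows "a = b"
proof (rule ccontr)
  assume "a \<noteq> b"
  then consider "precedes lam ii r a b" | "precedes lam ii r b a" using prec_total by blast
  then show False using rk_mono[of a d b lam ii r] rk_mono[of b d a lam ii r] assms by cases auto
qed

lemma rk_image: "rk lam ii r d ` {1..d} = {0..<d}"
proof -
  have inj: "inj_on (rk lam ii r d) {1..d}" using rk_inj by (meson inj_onI)
  have sub: "rk lam ii r d ` {1..d} \<subseteq> {0..<d}" using rk_less by fastforce
  have "card (rk lam ii r d ` {1..d}) = card {0..<d}" using card_image[OF inj] by simp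
  then show ?thesis using sub by (intro card_subset_eq) auto
qed

lemma sig_ex1:
  assumes "n \<in> {1..d}"
  shows "\<exists>!c. c \<in> {1..d} \<and> rk lam ii r d c = n - 1"
proof -
  have "n - 1 \<in> rk lam ii r d ` {1..d}" using assms rk_image by auto
  then obtain c where c: "c \<in> {1..d}" "rk lam ii r d c = n - 1" by auto
  show ?thesis
  proof (rule ex1I[of _ c])
    fix c' assume "c' \<in> {1..d} \<and> rk lam ii r d c' = n - 1"
    then show "c' = c" using rk_inj[of c' d c lam ii r] c by simp
  qed (use c in simp)
qed

lemma sig_props:
  assumes "n \<in> {1..d}"
  shows "sigma_ord lam d ii r n \<in> {1..d} \<and> rk lam ii r d (sigma_ord lam d ii r n) = n - 1"
proof -
  have "sigma_ord lam d ii r n = (THE c. c \<in> {1..d} \<and> rk lam ii r d c = n - 1)"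
    unfolding sigma_ord_def rk_def ..
  then show ?thesis using theI'[OF sig_ex1[OF assms, of lam ii r]] by simp
qed

lemma sig_surj:
  assumes "c \<in> {1..d}"
  shows "\<exists>n\<in>{1..d}. sigma_ord lam d ii r n = c"
proof -
  let ?n = "Suc (rk lam ii r d c)"
  have n: "?n \<in> {1..d}" using rk_less[OF assms, of lam ii r] by auto
  have "sigma_ord lam d ii r ?n = c"
    using sig_props[OF n, of lam ii r] rk_inj[OF _ assms] by auto
  then show ?thesis using n by blast
qed

lemma sig_anti:
  assumes "m \<in> {1..d}" "n \<in> {1..d}" "m \<le> n"
  shows "Lfun lam ii r (sigma_ord lam d ii r n) \<le> Lfun lam ii r (sigma_ord lam d ii r m)"
proof (cases "sigma_ord lam d ii r n = sigma_ord lam d ii r m")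
  case False
  have pm: "sigma_ord lam d ii r m \<in> {1..d}" "rk lam ii r d (sigma_ord lam d ii r m) = m - 1"
    using sig_props[OF assms(1)] by auto
  have pn: "sigma_ord lam d ii r n \<in> {1..d}" "rk lam ii r d (sigma_ord lam d ii r n) = n - 1"
    using sig_props[OF assms(2)] by auto
  have "\<not> precedes lam ii r (sigma_ord lam d ii r n) (sigma_ord lam d ii r m)"
  proof
    assume "precedes lam ii r (sigma_ord lam d ii r n) (sigma_ord lam d ii r m)"
    then have "n - 1 < m - 1" using rk_mono[where lam=lam and ii=ii and r=r, OF pn(1) pm(1)] pm pn by simp
    then show False using assms by simp
  qed
  then have "precedes lam ii r (sigma_ord lam d ii r m) (sigma_ord lam d ii r n)"
    using prec_total False by metis
  then show ?thesis by (rule prec_L)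
qed simp


lemma oe_sym: "overlap_exact lam t d sig n i j \<Longrightarrow> overlap_exact lam t d sig n j i"
  unfolding overlap_exact_def by simp

lemma oe_trans: "overlap_exact lam t d sig n i j \<Longrightarrow> overlap_exact lam t d sig n j k \<Longrightarrow> overlap_exact lam t d sig n i k"
  unfolding overlap_exact_def by simp

lemma oe_refl: "overlap_exact lam t d sig n i i"
  unfolding overlap_exact_def by simp

lemma Pi_ex1:
  assumes j: "j \<in> {1..N}"
    and uniq: "n = d \<Longrightarrow> \<forall>k\<in>{1..N}. \<forall>j\<in>{1..N}. overlap_exact lam t d sig n k j \<longrightarrow> k = j"
  shows "\<exists>!k. k \<in> Iset lam t d N sig n \<and> overlap_exact lam t d sig n k j"
proof (cases "n = d")
  case True
  show ?thesis
  proof (rule ex1I[of _ j])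
    show "j \<in> Iset lam t d N sig n \<and> overlap_exact lam t d sig n j j"
      using True j oe_refl unfolding Iset_def by auto
    fix k assume "k \<in> Iset lam t d N sig n \<and> overlap_exact lam t d sig n k j"
    then have "k \<in> {1..N}" "overlap_exact lam t d sig n k j" using True unfolding Iset_def by auto
    then show "k = j" using uniq True j by blast
  qed
next
  case False
  let ?P = "\<lambda>k. k \<in> {1..N} \<and> overlap_exact lam t d sig n k j"
  define k0 where "k0 = (LEAST k. ?P k)"
  have Pk0: "?P k0" unfolding k0_def by (rule LeastI[of ?P j]) (use j oe_refl in auto)
  have k0I: "k0 \<in> Iset lam t d N sig n"
  proof -
    have "\<not> (\<exists>i\<in>{1..N}. i < k0 \<and> overlap_exact lam t d sig n i k0)"
    proof
      assume "\<exists>i\<in>{1..N}. i < k0 \<and> overlap_exact lam t d sig n i k0"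
      then obtain i where i: "i \<in> {1..N}" "i < k0" "overlap_exact lam t d sig n i k0" by blast
      then have "?P i" using Pk0 oe_trans[of lam t d sig n i k0 j] by simp
      then have "k0 \<le> i" unfolding k0_def by (rule Least_le)
      then show False using i by simp
    qed
    then show ?thesis using False Pk0 unfolding Iset_def by auto
  qed
  show ?thesis
  proof (rule ex1I[of _ k0])
    show "k0 \<in> Iset lam t d N sig n \<and> overlap_exact lam t d sig n k0 j" using k0I Pk0 by blast
    fix k assume k: "k \<in> Iset lam t d N sig n \<and> overlap_exact lam t d sig n k j"
    have kk0: "overlap_exact lam t d sig n k k0" using k Pk0 oe_sym[of lam t d sig n k0 j] oe_trans[of lam t d sig n k j k0] by simp
    show "k = k0"
    proof (rule ccontr)
      assume "k \<noteq> k0"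
      then consider "k < k0" | "k0 < k" by linarith
      then show False
      proof cases
        case 1
        have "k \<in> {1..N}" using k False unfolding Iset_def by simp
        then show False using 1 k0I kk0 False unfolding Iset_def by auto
      next
        case 2
        have "k0 \<in> {1..N}" using k0I False unfolding Iset_def by simp
        then show False using 2 k oe_sym[OF kk0] False unfolding Iset_def by auto
      qed
    qed
  qed
qed

lemma Pi_proj_eq:
  assumes j: "j \<in> {1..N}" and i: "i \<in> {1..N}"
    and uniq: "n = d \<Longrightarrow> \<forall>k\<in>{1..N}. \<forall>j\<in>{1..N}. overlap_exact lam t d sig n k j \<longrightarrow> k = j"
  shows "Pi_proj lam t d N sig n j = Pi_proj lam t d N sig n i \<longleftrightarrow> overlap_exact lam t d sig n j i"
proof -
  have pj: "Pi_proj lam t d N sig n j \<in> Iset lam t d N sig n \<and> overlap_exact lam t d sig n (Pi_proj lam t d N sig n j) j"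
    unfolding Pi_proj_def by (rule theI'[OF Pi_ex1[OF j uniq]])
  have pi: "Pi_proj lam t d N sig n i \<in> Iset lam t d N sig n \<and> overlap_exact lam t d sig n (Pi_proj lam t d N sig n i) i"
    unfolding Pi_proj_def by (rule theI'[OF Pi_ex1[OF i uniq]])
  show ?thesis
  proof
    assume "Pi_proj lam t d N sig n j = Pi_proj lam t d N sig n i"
    then have "overlap_exact lam t d sig n (Pi_proj lam t d N sig n j) i" using pi by simp
    then show "overlap_exact lam t d sig n j i" using pj oe_sym oe_trans by blast
  next
    assume ji: "overlap_exact lam t d sig n j i"
    have "overlap_exact lam t d sig n (Pi_proj lam t d N sig n i) j"
      using pi oe_sym[OF ji] oe_trans by blast
    then show "Pi_proj lam t d N sig n j = Pi_proj lam t d N sig n i"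
      using Pi_ex1[OF j uniq] pi pj by (metis (no_types, lifting))
  qed
qed

lemma lcp_ge: "enat L \<le> lcp f g \<longleftrightarrow> (\<forall>l<L. f l = g l)"
proof (cases "f = g")
  case True then show ?thesis by (simp add: lcp_def)
next
  case False
  define k0 where "k0 = (LEAST k. f k \<noteq> g k)"
  have lc: "lcp f g = enat k0" using False by (simp add: lcp_def k0_def)
  obtain k where k: "f k \<noteq> g k" using False by auto
  have lk: "f k0 \<noteq> g k0" unfolding k0_def using k by (rule LeastI)
  have lt: "\<And>l. l < k0 \<Longrightarrow> f l = g l"
    unfolding k0_def using not_less_Least[where P="\<lambda>k. f k \<noteq> g k"] by blast
  show ?thesis
  proof
    assume "enat L \<le> lcp f g"
    then have "L \<le> k0" using lc by simp
    then show "\<forall>l<L. f l = g l" using lt by simp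
  next
    assume h: "\<forall>l<L. f l = g l"
    have "L \<le> k0"
    proof (rule ccontr)
      assume "\<not> L \<le> k0"
      then have "k0 < L" by simp
      then show False using h lk by blast
    qed
    then show "enat L \<le> lcp f g" using lc by simp
  qed
qed


definition ovl :: "(nat \<Rightarrow> nat \<Rightarrow> real) \<Rightarrow> (nat \<Rightarrow> nat \<Rightarrow> real) \<Rightarrow> nat \<Rightarrow> nat set \<Rightarrow> nat \<Rightarrow> nat \<Rightarrow> bool" where
  "ovl lam t d S i j \<longleftrightarrow> (\<forall>c\<in>S. \<forall>x\<in>unit_cube d. fmap lam t i x c = fmap lam t j x c)"

lemma oe_ovl: "overlap_exact lam t d sig n i j = ovl lam t d (sig ` {1..n}) i j"
  unfolding overlap_exact_def ovl_def by blast

lemma cube_char: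
  assumes ii: "ii \<in> SigmaN N"
    and maps_distinct: "\<forall>i\<in>{1..N}. \<forall>j\<in>{1..N}. i \<noteq> j \<longrightarrow>
                          (\<exists>x\<in>unit_cube d. \<exists>n\<in>{1..d}. fmap lam t i x n \<noteq> fmap lam t j x n)"
  shows "approx_cube lam t d N ii r =
     {jj \<in> SigmaN N. \<forall>l. ovl lam t d {c \<in> {1..d}. l < Lfun lam ii r c} (jj l) (ii l)}"
proof -
  let ?sig = "sigma_ord lam d ii r"
  let ?L = "Lfun lam ii r"
  have sigimg: "?sig ` {1..d} = {1..d}"
    using sig_props[of _ d lam ii r] sig_surj[of _ d lam ii r] by (auto simp del: atLeastAtMost_iff)
  have uniq: "n = d \<Longrightarrow> \<forall>k\<in>{1..N}. \<forall>j\<in>{1..N}. overlap_exact lam t d ?sig n k j \<longrightarrow> k = j" for n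
  proof (intro ballI impI)
    fix k j assume "n = d" "k \<in> {1..N}" "j \<in> {1..N}" "overlap_exact lam t d ?sig n k j"
    then have "\<forall>x\<in>unit_cube d. \<forall>c\<in>?sig ` {1..d}. fmap lam t k x c = fmap lam t j x c"
      unfolding overlap_exact_def by blast
    then have "\<forall>x\<in>unit_cube d. \<forall>c\<in>{1..d}. fmap lam t k x c = fmap lam t j x c"
      unfolding sigimg .
    then show "k = j" using maps_distinct \<open>k \<in> {1..N}\<close> \<open>j \<in> {1..N}\<close> by blast
  qed
  have step: "(\<forall>n\<in>{1..d}. enat (?L (?sig n))
            \<le> lcp (Pi_proj lam t d N ?sig n \<circ> jj) (Pi_proj lam t d N ?sig n \<circ> ii))
        \<longleftrightarrow> (\<forall>l. ovl lam t d {c \<in> {1..d}. l < ?L c} (jj l) (ii l))"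
    if jj: "jj \<in> SigmaN N" for jj
  proof -
    have jl: "jj l \<in> {1..N}" "ii l \<in> {1..N}" for l using jj ii unfolding SigmaN_def by auto
    have "(\<forall>n\<in>{1..d}. enat (?L (?sig n))
            \<le> lcp (Pi_proj lam t d N ?sig n \<circ> jj) (Pi_proj lam t d N ?sig n \<circ> ii))
        \<longleftrightarrow> (\<forall>n\<in>{1..d}. \<forall>l<?L (?sig n). ovl lam t d (?sig ` {1..n}) (jj l) (ii l))"
      by (simp only: lcp_ge o_def Pi_proj_eq[OF jl(1) jl(2) uniq] oe_ovl)
    also have "\<dots> \<longleftrightarrow> (\<forall>l. ovl lam t d {c \<in> {1..d}. l < ?L c} (jj l) (ii l))"
    proof
      assume H: "\<forall>n\<in>{1..d}. \<forall>l<?L (?sig n). ovl lam t d (?sig ` {1..n}) (jj l) (ii l)"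
      show "\<forall>l. ovl lam t d {c \<in> {1..d}. l < ?L c} (jj l) (ii l)"
        unfolding ovl_def
      proof (intro allI ballI)
        fix l c x assume c: "c \<in> {c \<in> {1..d}. l < ?L c}" and x: "x \<in> unit_cube d"
        obtain n where n: "n \<in> {1..d}" "?sig n = c" using sig_surj[of c d lam ii r] c by auto
        have "ovl lam t d (?sig ` {1..n}) (jj l) (ii l)" using H n c by auto
        moreover have "c \<in> ?sig ` {1..n}" using n by auto
        ultimately show "fmap lam t (jj l) x c = fmap lam t (ii l) x c" using x unfolding ovl_def by blast
      qed
    next
      assume H: "\<forall>l. ovl lam t d {c \<in> {1..d}. l < ?L c} (jj l) (ii l)"
      show "\<forall>n\<in>{1..d}. \<forall>l<?L (?sig n). ovl lam t d (?sig ` {1..n}) (jj l) (ii l)"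
      proof (intro ballI allI impI)
        fix n l assume n: "n \<in> {1..d}" and l: "l < ?L (?sig n)"
        have "?sig ` {1..n} \<subseteq> {c \<in> {1..d}. l < ?L c}"
        proof
          fix c assume "c \<in> ?sig ` {1..n}"
          then obtain m where m: "m \<in> {1..n}" "c = ?sig m" by auto
          have md: "m \<in> {1..d}" using m n by auto
          have "?L (?sig n) \<le> ?L (?sig m)" using sig_anti[OF md n] m by auto
          then show "c \<in> {c \<in> {1..d}. l < ?L c}" using sig_props[OF md, of lam ii r] m l by auto
        qed
        then show "ovl lam t d (?sig ` {1..n}) (jj l) (ii l)" using H unfolding ovl_def by blast
      qed
    qed
    finally show ?thesis .
  qed
  show ?thesis
    unfolding approx_cube_def Let_def using step by blast
qed


lemma ovl_mono: "S \<subseteq> S' \<Longrightarrow> ovl lam t d S' i j \<Longrightarrow> ovl lam t d S i j"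
  unfolding ovl_def by blast

lemma ovl_empty: "ovl lam t d {} i j"
  unfolding ovl_def by blast

lemma L_exists:
  fixes lam :: "nat \<Rightarrow> nat \<Rightarrow> real" and R q :: real
  assumes ii: "ii \<in> SigmaN N" and c: "c \<in> {1..d}" and R: "0 < R"
    and lr: "\<forall>i\<in>{1..N}. \<forall>n\<in>{1..d}. 0 < lam i n \<and> lam i n < q" and q: "q < 1"
  shows "\<exists>k. (\<Prod>l<k. lam (ii l) c) \<le> R"
proof -
  have i0: "ii 0 \<in> {1..N}" using ii unfolding SigmaN_def by blast
  have "0 < lam (ii 0) c \<and> lam (ii 0) c < q" using lr c i0 by blast
  then have q0: "0 < q" by linarith
  obtain k where k: "q ^ k < R" using real_arch_pow_inv[OF R q] by blast
  have "(\<Prod>l<k. lam (ii l) c) \<le> (\<Prod>l<k. q)"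
  proof (rule prod_mono)
    fix l assume "l \<in> {..<k}"
    have "ii l \<in> {1..N}" using ii unfolding SigmaN_def by auto
    then have "0 < lam (ii l) c \<and> lam (ii l) c < q" using lr c by blast
    then show "0 \<le> lam (ii l) c \<and> lam (ii l) c \<le> q" by linarith
  qed
  then show ?thesis using k by (intro exI[of _ k]) simp
qed

lemma L_bounds:
  fixes lam :: "nat \<Rightarrow> nat \<Rightarrow> real" and R q :: real
  assumes ii: "ii \<in> SigmaN N" and c: "c \<in> {1..d}" and R: "0 < R"
    and lr: "\<forall>i\<in>{1..N}. \<forall>n\<in>{1..d}. 0 < lam i n \<and> lam i n < q" and q: "q < 1"
  shows "Lfun lam ii R c \<le> Lfun lam ii (q * R) c \<and> Lfun lam ii (q * R) c \<le> Suc (Lfun lam ii R c)"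
proof -
  have i0: "ii 0 \<in> {1..N}" using ii unfolding SigmaN_def by blast
  have "0 < lam (ii 0) c \<and> lam (ii 0) c < q" using lr c i0 by blast
  then have q0: "0 < q" by linarith
  have qR: "0 < q * R" using q0 R by simp
  obtain k where k: "(\<Prod>l<k. lam (ii l) c) \<le> q * R" using L_exists[OF ii c qR lr q] by blast
  have P1: "(\<Prod>l<Lfun lam ii (q * R) c. lam (ii l) c) \<le> q * R"
    unfolding Lfun_def using k by (rule LeastI)
  have "Lfun lam ii R c \<le> Lfun lam ii (q * R) c"
    unfolding Lfun_def
    by (rule Least_le) (use P1[unfolded Lfun_def] q R in \<open>simp add: mult_le_cancel_right1 order_trans\<close>)
  moreover have "Lfun lam ii (q * R) c \<le> Suc (Lfun lam ii R c)"
  proof -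
    obtain k' where k': "(\<Prod>l<k'. lam (ii l) c) \<le> R" using L_exists[OF ii c R lr q] by blast
    have P0: "(\<Prod>l<Lfun lam ii R c. lam (ii l) c) \<le> R"
      unfolding Lfun_def using k' by (rule LeastI)
    have il: "ii (Lfun lam ii R c) \<in> {1..N}" using ii unfolding SigmaN_def by auto
    have lm: "0 < lam (ii (Lfun lam ii R c)) c" "lam (ii (Lfun lam ii R c)) c < q" using lr il c by auto
    have "(\<Prod>l<Suc (Lfun lam ii R c). lam (ii l) c) = (\<Prod>l<Lfun lam ii R c. lam (ii l) c) * lam (ii (Lfun lam ii R c)) c"
      by simp
    also have "\<dots> \<le> R * lam (ii (Lfun lam ii R c)) c"
      using P0 lm by (intro mult_right_mono) auto
    also have "\<dots> \<le> q * R" using lm R by (simp add: mult.commute)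
    finally show ?thesis unfolding Lfun_def by (rule Least_le)
  qed
  ultimately show ?thesis by blast
qed


theorem lemma5p5:
  fixes d N :: nat and lam t :: "nat \<Rightarrow> nat \<Rightarrow> real" and p :: "nat pmf" and \<epsilon> :: real
  assumes d_pos: "d \<ge> 1"
    and lam_range: "\<forall>i\<in>{1..N}. \<forall>n\<in>{1..d}. 0 < lam i n \<and> lam i n < 1"
    and maps_into: "\<forall>i\<in>{1..N}. \<forall>x\<in>unit_cube d. (\<lambda>n. fmap lam t i x n) \<in> unit_cube d"
    and maps_distinct: "\<forall>i\<in>{1..N}. \<forall>j\<in>{1..N}. i \<noteq> j \<longrightarrow>
                          (\<exists>x\<in>unit_cube d. \<exists>n\<in>{1..d}. fmap lam t i x n \<noteq> fmap lam t j x n)"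
    and coords_distinct: "\<forall>n\<in>{1..d}. \<forall>m\<in>{1..d}. m \<noteq> n \<longrightarrow> (\<exists>i\<in>{1..N}. lam i n \<noteq> lam i m)"
    and p_support: "set_pmf p = {1..N}"
    and eps_pos: "\<epsilon> > 0"
    and eps_small: "\<forall>i\<in>{1..N}. \<forall>n\<in>{1..d}. lam i n < 1 - \<epsilon>"
  shows "\<exists>C1::real. \<forall>ii\<in>SigmaN N. \<forall>R. 0 < R \<and> R \<le> 1 \<longrightarrow>
           measure (bernoulli_measure p) (approx_cube lam t d N ii R)
             / measure (bernoulli_measure p) (approx_cube lam t d N ii ((1 - \<epsilon>) * R)) \<le> C1"
proof -
  have N1: "1 \<le> N" using p_support set_pmf_not_empty[of p] by fastforce
  have lr: "\<forall>i\<in>{1..N}. \<forall>n\<in>{1..d}. 0 < lam i n \<and> lam i n < 1 - \<epsilon>"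
    using lam_range eps_small by blast
  have "0 < lam 1 1 \<and> lam 1 1 < 1 - \<epsilon>" using lr N1 d_pos by auto
  then have q1: "1 - \<epsilon> < 1" and q0: "0 < 1 - \<epsilon>" using eps_pos by linarith+
  define pmin where "pmin = Min (pmf p ` {1..N})"
  have pmin_le: "pmin \<le> pmf p k" if "k \<in> {1..N}" for k
    unfolding pmin_def using that by (intro Min_le) auto
  have pmin_pos: "0 < pmin"
  proof -
    have "pmin \<in> pmf p ` {1..N}" unfolding pmin_def using N1 by (intro Min_in) auto
    then obtain k where "k \<in> {1..N}" "pmin = pmf p k" by blast
    then show ?thesis using p_support by (simp add: pmf_positive)
  qed
  have pmin_le1: "pmin \<le> 1" using pmin_le[of 1] N1 pmf_le_1[of p 1] by simp
  show ?thesis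
  proof (intro exI[of _ "1 / pmin ^ d"] ballI allI impI)
    fix ii and R :: real assume ii: "ii \<in> SigmaN N" and R: "0 < R \<and> R \<le> 1"
    define R' where "R' = (1 - \<epsilon>) * R"
    have iil: "ii l \<in> {1..N}" for l using ii unfolding SigmaN_def by blast
    define L where "L = Lfun lam ii R"
    define L' where "L' = Lfun lam ii R'"
    have LB: "L c \<le> L' c \<and> L' c \<le> Suc (L c)" if "c \<in> {1..d}" for c
      unfolding L_def L'_def R'_def using L_bounds[OF ii that conjunct1[OF R] lr q1] by simp
    define M where "M = Max (L' ` {1..d})"
    have LM1: "L' c \<le> M" if "c \<in> {1..d}" for c
      unfolding M_def by (rule Max_ge) (use that in auto)
    have LM: "L' c \<le> M" "L c \<le> M" if "c \<in> {1..d}" for c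
      using LM1[OF that] LB[OF that] by linarith+
    define T where "T = (\<lambda>l. {c \<in> {1..d}. l < L c})"
    define T' where "T' = (\<lambda>l. {c \<in> {1..d}. l < L' c})"
    define A where "A = (\<lambda>l. {k. ovl lam t d (T l) k (ii l)})"
    define A' where "A' = (\<lambda>l. {k. ovl lam t d (T' l) k (ii l)})"
    have BR: "approx_cube lam t d N ii R = {jj \<in> SigmaN N. \<forall>l<M. jj l \<in> A l}"
    proof -
      have "T l = {}" if "M \<le> l" for l
      proof -
        { fix c assume "c \<in> {1..d}" "l < L c"
          then have False using LM(2)[of c] that by linarith }
        then show ?thesis unfolding T_def by blast
      qed
      then have "\<forall>l. M \<le> l \<longrightarrow> ovl lam t d (T l) k (ii l)" for k using ovl_empty by metis
      then have H: "\<forall>l. M \<le> l \<longrightarrow> ovl lam t d (T l) (jj l) (ii l)" for jj by blast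
      have e: "(\<forall>l. ovl lam t d (T l) (jj l) (ii l)) \<longleftrightarrow> (\<forall>l<M. jj l \<in> A l)" for jj
      proof
        assume "\<forall>l. ovl lam t d (T l) (jj l) (ii l)"
        then show "\<forall>l<M. jj l \<in> A l" unfolding A_def by blast
      next
        assume h: "\<forall>l<M. jj l \<in> A l"
        show "\<forall>l. ovl lam t d (T l) (jj l) (ii l)"
        proof
          fix l show "ovl lam t d (T l) (jj l) (ii l)"
          proof (cases "l < M")
            case True then show ?thesis using h unfolding A_def by blast
          next
            case False then show ?thesis using H[of jj] by simp
          qed
        qed
      qed
      have "approx_cube lam t d N ii R = {jj \<in> SigmaN N. \<forall>l. ovl lam t d (T l) (jj l) (ii l)}"
        unfolding cube_char[OF ii maps_distinct] T_def L_def ..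
      then show ?thesis using e by simp
    qed
    have BR': "approx_cube lam t d N ii R' = {jj \<in> SigmaN N. \<forall>l<M. jj l \<in> A' l}"
    proof -
      have "T' l = {}" if "M \<le> l" for l
      proof -
        { fix c assume "c \<in> {1..d}" "l < L' c"
          then have False using LM(1)[of c] that by linarith }
        then show ?thesis unfolding T'_def by blast
      qed
      then have "\<forall>l. M \<le> l \<longrightarrow> ovl lam t d (T' l) k (ii l)" for k using ovl_empty by metis
      then have H: "\<forall>l. M \<le> l \<longrightarrow> ovl lam t d (T' l) (jj l) (ii l)" for jj by blast
      have e: "(\<forall>l. ovl lam t d (T' l) (jj l) (ii l)) \<longleftrightarrow> (\<forall>l<M. jj l \<in> A' l)" for jj
      proof
        assume "\<forall>l. ovl lam t d (T' l) (jj l) (ii l)"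
        then show "\<forall>l<M. jj l \<in> A' l" unfolding A'_def by blast
      next
        assume h: "\<forall>l<M. jj l \<in> A' l"
        show "\<forall>l. ovl lam t d (T' l) (jj l) (ii l)"
        proof
          fix l show "ovl lam t d (T' l) (jj l) (ii l)"
          proof (cases "l < M")
            case True then show ?thesis using h unfolding A'_def by blast
          next
            case False then show ?thesis using H[of jj] by simp
          qed
        qed
      qed
      have "approx_cube lam t d N ii R' = {jj \<in> SigmaN N. \<forall>l. ovl lam t d (T' l) (jj l) (ii l)}"
        unfolding cube_char[OF ii maps_distinct] T'_def L'_def ..
      then show ?thesis using e by simp
    qed
    have mR: "measure (bernoulli_measure p) (approx_cube lam t d N ii R) = (\<Prod>l<M. measure_pmf.prob p (A l))"
      unfolding BR by (rule bern_cyl[OF p_support])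
    have mR': "measure (bernoulli_measure p) (approx_cube lam t d N ii R') = (\<Prod>l<M. measure_pmf.prob p (A' l))"
      unfolding BR' by (rule bern_cyl[OF p_support])
    define D where "D = L ` {1..d}"
    have TT: "T l = T' l" if "l \<notin> D" for l
    proof -
      have "l < L c \<longleftrightarrow> l < L' c" if "c \<in> {1..d}" for c
        using LB[OF that] \<open>l \<notin> D\<close> that unfolding D_def by (cases "l = L c") auto
      then show ?thesis unfolding T_def T'_def by auto
    qed
    have A'low: "pmin \<le> measure_pmf.prob p (A' l)" for l
    proof -
      have "ii l \<in> A' l" unfolding A'_def ovl_def by simp
      then have "measure_pmf.prob p {ii l} \<le> measure_pmf.prob p (A' l)"
        by (intro measure_pmf.finite_measure_mono) auto
      then show ?thesis using pmin_le[OF iil[of l]] by (simp add: measure_pmf_single)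
    qed
    have fac: "(if l \<in> D then pmin else 1) * measure_pmf.prob p (A l) \<le> measure_pmf.prob p (A' l)" for l
    proof (cases "l \<in> D")
      case True
      have "pmin * measure_pmf.prob p (A l) \<le> pmin * 1"
        using pmin_pos by (intro mult_left_mono) auto
      then show ?thesis using True A'low[of l] by simp
    next
      case False
      then show ?thesis unfolding A_def A'_def using TT[OF False] by simp
    qed
    have "(\<Prod>l<M. (if l \<in> D then pmin else 1) * measure_pmf.prob p (A l)) \<le> (\<Prod>l<M. measure_pmf.prob p (A' l))"
      using fac pmin_pos by (intro prod_mono) auto
    moreover have "(\<Prod>l<M. (if l \<in> D then pmin else 1) * measure_pmf.prob p (A l))
        = (\<Prod>l<M. (if l \<in> D then pmin else 1)) * (\<Prod>l<M. measure_pmf.prob p (A l))"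
      by (rule prod.distrib)
    moreover have "(\<Prod>l<M. (if l \<in> D then pmin else 1)) = pmin ^ card ({..<M} \<inter> D)"
      by (simp add: prod.If_cases Int_def)
    moreover have "pmin ^ d \<le> pmin ^ card ({..<M} \<inter> D)"
    proof -
      have "card ({..<M} \<inter> D) \<le> card D" by (intro card_mono) (auto simp: D_def)
      also have "\<dots> \<le> d" unfolding D_def using card_image_le[of "{1..d}" L] by simp
      finally show ?thesis using pmin_pos pmin_le1 by (intro power_decreasing) auto
    qed
    ultimately have key: "pmin ^ d * (\<Prod>l<M. measure_pmf.prob p (A l)) \<le> (\<Prod>l<M. measure_pmf.prob p (A' l))"
      by (smt (verit) mult_right_mono prod_nonneg measure_nonneg)
    have pos': "0 < (\<Prod>l<M. measure_pmf.prob p (A' l))"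
      using A'low pmin_pos by (intro prod_pos) (auto intro: less_le_trans)
    have pd: "0 < pmin ^ d" using pmin_pos by simp
    show "measure (bernoulli_measure p) (approx_cube lam t d N ii R)
             / measure (bernoulli_measure p) (approx_cube lam t d N ii ((1 - \<epsilon>) * R)) \<le> 1 / pmin ^ d"
      unfolding R'_def[symmetric] mR mR' using key pos' pd
      by (simp add: divide_simps mult.commute)
  qed
qed

end
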